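(* Let $n\ge 3$, let $d_1,\dots,d_{n-1}>0$, and let $k_1,\dots,k_{n-1}$ be real gains with $k_1+1>k_2$, $k_i>k_{i+1}$ for $i=2,\ldots,n-2$, and $k_{n-1}>0$. Define $f:\mathbb{R}^{n-1}\to\mathbb{R}^{n-1}$, writing $s_i(z)=\mathrm{sgn}(z_i)\,\mathrm{sgn}(|z_i|-d_i)$, by $$f_1(z)=-(k_1+1)s_1(z)+k_2 s_2(z),$$ $$f_i(z)=s_{i-1}(z)-(k_i+1)s_i(z)+k_{i+1}s_{i+1}(z),\quad i=2,\ldots,n-2,$$ $$f_{n-1}(z)=s_{n-2}(z)-(k_{n-1}+1)s_{n-1}(z).$$ Then the set of equilibria $\{z\in\mathbb{R}^{n-1}:\mathbf{0}\in\mathcal{K}(f(z))\}$ equals $$\mathcal{E}=\Big\{z\in\mathbb{R}^{n-1}:\sum_{i=1}^{n-1}|z_i|\,\big||z_i|-d_i\big|=0\Big\}.$$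
   Context: The sign function is $\mathrm{sgn}(z)=+1$ if $z\ge 0$ and $\mathrm{sgn}(z)=-1$ if $z<0$. For a (possibly discontinuous) vector field $f$, the Krasowskii regularization is $\mathcal{K}(f(z))=\bigcap_{\delta>0}\overline{\mathrm{co}}\,(f(B(z,\delta)))$, where $\overline{\mathrm{co}}$ denotes the closed convex hull and $B(z,\delta)$ the open ball of radius $\delta$ centered at $z$. (The vector field $f$ arises as the dynamics of relative positions $z_i=x_i-x_{i+1}$ of $n$ agents on a line.) *)

theory Defs
  imports "HOL-Analysis.Analysis"
begin

definition sgnp :: "real \<Rightarrow> real" where
  "sgnp x = (if x \<ge> 0 then 1 else -1)"

definition krasowskii ::
  "('a::real_normed_vector \<Rightarrow> 'b::real_normed_vector) \<Rightarrow> 'a \<Rightarrow> 'b set" where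
  "krasowskii F z = (\<Inter>\<delta>\<in>{0<..}. closure (convex hull (F ` ball z \<delta>)))"

text \<open>Coordinates z_1,...,z_(n-1) indexed by naturals 1..n-1.
  s_i(z) = sgn(z_i) sgn(|z_i| - d_i).\<close>
definition s_fun :: "(nat \<Rightarrow> real) \<Rightarrow> (nat \<Rightarrow> real) \<Rightarrow> nat \<Rightarrow> real" where
  "s_fun d x i = sgnp (x i) * sgnp (\<bar>x i\<bar> - d i)"

definition f_comp ::
  "nat \<Rightarrow> (nat \<Rightarrow> real) \<Rightarrow> (nat \<Rightarrow> real) \<Rightarrow> (nat \<Rightarrow> real) \<Rightarrow> nat \<Rightarrow> real" where
  "f_comp n k d x i =
     (if i = 1 then - (k 1 + 1) * s_fun d x 1 + k 2 * s_fun d x 2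
      else if i = n - 1 then s_fun d x (n - 2) - (k (n - 1) + 1) * s_fun d x (n - 1)
      else s_fun d x (i - 1) - (k i + 1) * s_fun d x i + k (i + 1) * s_fun d x (i + 1))"

text \<open>R^(n-1) is modelled as real^'m with CARD('m) = n-1, together with a
  bijection idx from the index type onto {1..n-1} fixing the order of the
  coordinates. coords turns a vector into its coordinate sequence z_1..z_(n-1).\<close>
definition coords :: "('m::finite \<Rightarrow> nat) \<Rightarrow> real^'m \<Rightarrow> nat \<Rightarrow> real" where
  "coords idx z i = z $ inv_into UNIV idx i"

definition field_f ::
  "('m::finite \<Rightarrow> nat) \<Rightarrow> nat \<Rightarrow> (nat \<Rightarrow> real) \<Rightarrow> (nat \<Rightarrow> real) \<Rightarrow> real^'m \<Rightarrow> real^'m" where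
  "field_f idx n k d z = (\<chi> j. f_comp n k d (coords idx z) (idx j))"

end

theory Submission
  imports Defs
begin

definition Lin :: "nat \<Rightarrow> (nat\<Rightarrow>real) \<Rightarrow> (nat \<Rightarrow> real) \<Rightarrow> nat \<Rightarrow> real" where
"Lin n k \<sigma> i = (if i = 1 then - (k 1 + 1) * \<sigma> 1 + k 2 * \<sigma> 2
   else if i = n - 1 then \<sigma> (n - 2) - (k (n - 1) + 1) * \<sigma> (n - 1)
   else \<sigma> (i - 1) - (k i + 1) * \<sigma> i + k (i + 1) * \<sigma> (i + 1))"

lemma f_comp_Lin: "f_comp n k d x i = Lin n k (s_fun d x) i"
  unfolding f_comp_def Lin_def by simp

lemma Lin_cong:
  assumes "n \<ge> 3" "i \<in> {1..n-1}" "\<forall>j\<in>{1..n-1}. \<sigma> j = \<tau> j"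
  shows "Lin n k \<sigma> i = Lin n k \<tau> i"
proof -
  have h: "\<And>j. 1 \<le> j \<Longrightarrow> j \<le> n-1 \<Longrightarrow> \<sigma> j = \<tau> j" using assms(3) by auto
  show ?thesis using assms(1,2) unfolding Lin_def by (auto simp: h)
qed

lemma Lin_neg: "Lin n k (\<lambda>i. - \<sigma> i) i = - Lin n k \<sigma> i"
  by (simp add: Lin_def algebra_simps)

lemma k_pos:
  fixes n :: nat and k :: "nat \<Rightarrow> real"
  assumes "\<forall>i\<in>{2..n-2}. k i > k (i + 1)" "k (n - 1) > (0::real)" "n \<ge> 3"
  shows "2 \<le> j \<Longrightarrow> j \<le> n - 1 \<Longrightarrow> k j > 0"
proof -
  have "\<forall>j. n - 1 - j = t \<longrightarrow> 2 \<le> j \<longrightarrow> j \<le> n - 1 \<longrightarrow> k j > 0" for t :: nat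
  proof (induction t)
    case 0
    then show ?case using assms by (metis diff_is_0_eq le_antisym)
  next
    case (Suc t)
    show ?case
    proof (intro allI impI)
      fix j assume h: "n - 1 - j = Suc t" "2 \<le> j" "j \<le> n - 1"
      have "k (j+1) > 0" using Suc.IH h by auto
      moreover have "k j > k (j+1)" using assms(1) h by auto
      ultimately show "k j > 0" by linarith
    qed
  qed
  then show "2 \<le> j \<Longrightarrow> j \<le> n - 1 \<Longrightarrow> k j > 0" by blast
qed

lemma Lin_zero:
  assumes n3: "n \<ge> 3" and k1: "k 1 + 1 > k 2" and kd: "\<forall>i\<in>{2..n-2}. k i > k (i + 1)"
    and kn: "k (n - 1) > 0" and L: "\<forall>i\<in>{1..n-1}. Lin n k \<sigma> i = 0"
  shows "\<forall>i\<in>{1..n-1}. \<sigma> i = 0"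
proof -
  have kp: "\<And>j. 2 \<le> j \<Longrightarrow> j \<le> n - 1 \<Longrightarrow> k j > 0" using k_pos[OF kd kn n3] by blast
  define M where "M = Max ((\<lambda>i. \<bar>\<sigma> i\<bar>) ` {1..n-1})"
  have fin: "finite ((\<lambda>i. \<bar>\<sigma> i\<bar>) ` {1..n-1})" "(\<lambda>i. \<bar>\<sigma> i\<bar>) ` {1..n-1} \<noteq> {}" using n3 by auto
  obtain i0 where i0: "i0 \<in> {1..n-1}" "\<bar>\<sigma> i0\<bar> = M" using Max_in[OF fin] M_def by auto
  have le: "\<And>i. i \<in> {1..n-1} \<Longrightarrow> \<bar>\<sigma> i\<bar> \<le> M" using Max_ge[OF fin(1)] M_def by auto
  have M0: "M \<ge> 0" using i0 by auto
  have "M \<le> 0"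
  proof (cases "i0 = 1")
    case True
    have "Lin n k \<sigma> 1 = 0" using L n3 by auto
    hence e: "(k 1 + 1) * \<sigma> 1 = k 2 * \<sigma> 2" by (simp add: Lin_def algebra_simps)
    have k2: "k 2 > 0" using kp n3 by auto
    have "(k 1 + 1) * M = \<bar>(k 1 + 1) * \<sigma> 1\<bar>" using True i0 k1 k2 by (simp add: abs_mult)
    also have "\<dots> = k 2 * \<bar>\<sigma> 2\<bar>" using e k2 by (simp add: abs_mult)
    also have "\<dots> \<le> k 2 * M" using le[of 2] n3 k2 by (intro mult_left_mono) auto
    finally have "(k 1 + 1 - k 2) * M \<le> 0" by (simp add: algebra_simps)
    then show ?thesis using k1 M0 by (simp add: mult_le_0_iff)
  next
    case F1: False
    show ?thesis
    proof (cases "i0 = n - 1")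
      case True
      have "Lin n k \<sigma> (n-1) = 0" using L n3 by auto
      hence e: "(k (n-1) + 1) * \<sigma> (n-1) = \<sigma> (n-2)" proof -
        have ne: "n - Suc 0 \<noteq> Suc 0" using n3 by linarith
        show ?thesis using \<open>Lin n k \<sigma> (n-1) = 0\<close> ne unfolding Lin_def by (simp add: algebra_simps)
      qed
      have "(k (n-1) + 1) * M = \<bar>(k (n-1) + 1) * \<sigma> (n-1)\<bar>" using True i0 kn by (simp add: abs_mult)
      also have "\<dots> = \<bar>\<sigma> (n-2)\<bar>" using e by simp
      also have "\<dots> \<le> M" using le[of "n-2"] n3 by (simp; linarith)
      finally have "k (n-1) * M \<le> 0" by (simp add: algebra_simps)
      then show ?thesis using kn M0 by (simp add: mult_le_0_iff)
    next
      case False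
      have ir: "2 \<le> i0" "i0 \<le> n - 2" using i0 F1 False by auto
      have "Lin n k \<sigma> i0 = 0" using L i0 by auto
      hence e: "(k i0 + 1) * \<sigma> i0 = \<sigma> (i0 - 1) + k (i0+1) * \<sigma> (i0+1)" using F1 False by (simp add: Lin_def algebra_simps)
      have "i0 - 1 \<in> {1..n-1}" "i0 + 1 \<in> {1..n-1}" using ir by auto
      have kk: "k (i0+1) > 0" using kp ir by auto
      have ki: "k i0 > k (i0+1)" using kd ir by auto
      have "(k i0 + 1) * M = \<bar>(k i0 + 1) * \<sigma> i0\<bar>" using i0 ki kk by (simp add: abs_mult)
      also have "\<dots> \<le> \<bar>\<sigma> (i0 - 1)\<bar> + k (i0+1) * \<bar>\<sigma> (i0+1)\<bar>" using e kk
        by (metis abs_mult abs_of_pos abs_triangle_ineq)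
      also have "\<dots> \<le> M + k (i0+1) * M" using le[of "i0-1"] le[of "i0+1"] ir kk
          \<open>i0 - 1 \<in> {1..n-1}\<close> \<open>i0 + 1 \<in> {1..n-1}\<close>
        by (intro add_mono mult_left_mono) auto
      finally have "(k i0 - k (i0+1)) * M \<le> 0" by (simp add: algebra_simps)
      then show ?thesis using ki M0 by (simp add: mult_le_0_iff)
    qed
  qed
  then show ?thesis using le by fastforce
qed

lemma sgn_stable:
  assumes "\<bar>y - x\<bar> < \<bar>x\<bar>" "\<bar>y - x\<bar> < \<bar>\<bar>x\<bar> - e\<bar>"
  shows "sgnp y * sgnp (\<bar>y\<bar> - e) = sgnp x * sgnp (\<bar>x\<bar> - e)"
proof -
  have a: "sgnp y = sgnp x" using assms(1) unfolding sgnp_def by (auto split: if_splits abs_split)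
  have b: "sgnp (\<bar>y\<bar> - e) = sgnp (\<bar>x\<bar> - e)"
  proof -
    have "\<bar>\<bar>y\<bar> - \<bar>x\<bar>\<bar> \<le> \<bar>y - x\<bar>" by (rule abs_triangle_ineq3)
    then show ?thesis using assms(2) unfolding sgnp_def by (auto split: if_splits abs_split)
  qed
  show ?thesis using a b by simp
qed

lemma sgn_flip:
  assumes "x = 0 \<or> \<bar>x\<bar> = e" "0 < \<epsilon>" "\<epsilon> < e"
  shows "sgnp (x+\<epsilon>) * sgnp (\<bar>x+\<epsilon>\<bar> - e) = - (sgnp (x-\<epsilon>) * sgnp (\<bar>x-\<epsilon>\<bar> - e))"
  using assms unfolding sgnp_def by (auto split: if_splits abs_split)

 

lemma closed_comp_eq: "closed {w::real^'m. w $ i = c}"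
  by (intro closed_Collect_eq continuous_intros)

lemma convex_comp_eq: "convex {w::real^'m. w $ i = c}"
  unfolding convex_def by (auto simp flip: distrib_right)

theorem proposition1:
  fixes idx :: "'m::finite \<Rightarrow> nat" and n :: nat and k d :: "nat \<Rightarrow> real"
  assumes "n \<ge> 3"
    and "CARD('m) = n - 1"
    and "bij_betw idx UNIV {1..n-1}"
    and "\<forall>i\<in>{1..n-1}. d i > 0"
    and "k 1 + 1 > k 2"
    and "\<forall>i\<in>{2..n-2}. k i > k (i + 1)"
    and "k (n - 1) > 0"
  shows "{z :: real^'m. 0 \<in> krasowskii (field_f idx n k d) z}
       = {z :: real^'m. (\<Sum>i=1..n-1. \<bar>coords idx z i\<bar> * \<bar>\<bar>coords idx z i\<bar> - d i\<bar>) = 0}"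
proof -
  note n3 = assms(1)
  define g where "g = inv_into UNIV idx"
  define F where "F = field_f idx n k d"
  have idx_in: "\<And>jj. idx jj \<in> {1..n-1}" using assms(3) bij_betwE by blast
  have idx_g: "\<And>i. i \<in> {1..n-1} \<Longrightarrow> idx (g i) = i"
    unfolding g_def using assms(3) by (simp add: bij_betw_inv_into_right)
  have co: "\<And>v i. coords idx v i = v $ g i" unfolding coords_def g_def by simp
  have F_eq: "\<And>v jj. F v $ jj = Lin n k (s_fun d (coords idx v)) (idx jj)"
    unfolding F_def field_f_def by (simp add: f_comp_Lin)
  have sum0: "(\<Sum>i=1..n-1. \<bar>coords idx z i\<bar> * \<bar>\<bar>coords idx z i\<bar> - d i\<bar>) = 0 \<longleftrightarrow>
     (\<forall>i\<in>{1..n-1}. coords idx z i = 0 \<or> \<bar>coords idx z i\<bar> = d i)" for z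
    by (subst sum_nonneg_eq_0_iff) auto
  show ?thesis
  proof (intro set_eqI iffI; simp only: mem_Collect_eq F_def[symmetric])
    fix z :: "real^'m"
    assume H: "0 \<in> krasowskii F z"
    show "(\<Sum>i=1..n-1. \<bar>coords idx z i\<bar> * \<bar>\<bar>coords idx z i\<bar> - d i\<bar>) = 0"
    proof (rule ccontr)
      assume "\<not> ?thesis"
      then obtain j0 where j0: "j0 \<in> {1..n-1}" "coords idx z j0 \<noteq> 0" "\<bar>coords idx z j0\<bar> \<noteq> d j0"
        using sum0 by blast
      define x0 where "x0 = coords idx z j0"
      define \<delta> where "\<delta> = min \<bar>x0\<bar> \<bar>\<bar>x0\<bar> - d j0\<bar>"
      have \<delta>0: "\<delta> > 0" using j0 unfolding \<delta>_def x0_def by auto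
      define c where "c = s_fun d (coords idx z) j0"
      define T where "T = (\<lambda>w::real^'m. \<chi> jj. Lin n k (coords idx w) (idx jj))"
      define B where "B = cbox (vec (-1)) (vec 1) \<inter> {w::real^'m. w $ g j0 = c}"
      have linT: "linear T"
        by (rule linearI) (auto simp: T_def vec_eq_iff Lin_def coords_def algebra_simps)
      have cB: "compact B" unfolding B_def by (intro compact_Int_closed compact_cbox closed_comp_eq)
      have vB: "convex B" unfolding B_def by (intro convex_Int convex_box convex_comp_eq)
      have cTB: "compact (T ` B)"
        using cB linT by (intro compact_continuous_image linear_continuous_on)
          (simp add: linear_conv_bounded_linear)
      have vTB: "convex (T ` B)" using linT vB by (rule convex_linear_image)
      have sub: "F ` ball z \<delta> \<subseteq> T ` B"
      proof
        fix y assume "y \<in> F ` ball z \<delta>"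
        then obtain v where v: "v \<in> ball z \<delta>" "y = F v" by auto
        define w where "w = (\<chi> jj. s_fun d (coords idx v) (idx jj))"
        have cw: "\<And>i. i \<in> {1..n-1} \<Longrightarrow> coords idx w i = s_fun d (coords idx v) i"
          unfolding w_def by (simp add: co idx_g)
        have "\<bar>v $ g j0 - z $ g j0\<bar> \<le> norm (v - z)"
          by (metis component_le_norm_cart vector_minus_component)
        also have "\<dots> < \<delta>" using v(1) by (simp add: dist_norm norm_minus_commute)
        finally have "\<bar>coords idx v j0 - x0\<bar> < \<delta>" by (simp add: co x0_def)
        hence sv: "s_fun d (coords idx v) j0 = c"
          unfolding c_def s_fun_def using sgn_stable[of "coords idx v j0" x0 "d j0"]
          by (simp add: \<delta>_def x0_def)
        have "w \<in> B"
          unfolding B_def using cw[OF j0(1)] sv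
          by (auto simp: mem_box_cart w_def s_fun_def sgnp_def co[symmetric])
        moreover have "y = T w"
        proof -
          have "y $ jj = T w $ jj" for jj
          proof -
            have "y $ jj = Lin n k (s_fun d (coords idx v)) (idx jj)" using v(2) by (simp add: F_eq)
            also have "\<dots> = Lin n k (coords idx w) (idx jj)"
              by (rule Lin_cong[OF n3 idx_in]) (simp add: cw)
            finally show ?thesis by (simp add: T_def)
          qed
          then show ?thesis by (simp add: vec_eq_iff)
        qed
        ultimately show "y \<in> T ` B" by blast
      qed
      have "krasowskii F z \<subseteq> closure (convex hull (F ` ball z \<delta>))"
        unfolding krasowskii_def using \<delta>0 by auto
      also have "\<dots> \<subseteq> T ` B"
        by (intro closure_minimal hull_minimal sub vTB compact_imp_closed cTB)
      finally obtain w where w: "w \<in> B" "T w = 0" using H by auto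
      have "\<forall>i\<in>{1..n-1}. Lin n k (coords idx w) i = 0"
      proof
        fix i assume i: "i \<in> {1..n-1}"
        have "T w $ g i = 0" using w by simp
        thus "Lin n k (coords idx w) i = 0" using idx_g[OF i] by (simp add: T_def)
      qed
      hence "coords idx w j0 = 0" using Lin_zero[OF n3 assms(5,6,7)] j0(1) by blast
      moreover have "coords idx w j0 = c" using w(1) by (simp add: B_def co)
      moreover have "c \<noteq> 0" by (simp add: c_def s_fun_def sgnp_def)
      ultimately show False by simp
    qed
  next
    fix z :: "real^'m"
    assume "(\<Sum>i=1..n-1. \<bar>coords idx z i\<bar> * \<bar>\<bar>coords idx z i\<bar> - d i\<bar>) = 0"
    hence E: "\<forall>i\<in>{1..n-1}. coords idx z i = 0 \<or> \<bar>coords idx z i\<bar> = d i" using sum0 by blast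
    show "0 \<in> krasowskii F z"
      unfolding krasowskii_def
    proof (intro INT_I)
      fix \<delta> :: real assume "\<delta> \<in> {0<..}"
      hence \<delta>0: "\<delta> > 0" by simp
      define dm where "dm = Min (d ` {1..n-1})"
      have dm0: "dm > 0" unfolding dm_def using assms(4) n3 by (subst Min_gr_iff) auto
      have dmle: "\<And>i. i \<in> {1..n-1} \<Longrightarrow> dm \<le> d i" unfolding dm_def by simp
      define \<epsilon> where "\<epsilon> = min (\<delta> / (2 * real CARD('m))) (dm / 2)"
      have e0: "\<epsilon> > 0" using \<delta>0 dm0 by (simp add: \<epsilon>_def)
      have ed: "\<And>i. i \<in> {1..n-1} \<Longrightarrow> \<epsilon> < d i" using dmle dm0 unfolding \<epsilon>_def by fastforce
      define u where "u = (\<chi> i::'m. \<epsilon>)"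
      have nu: "norm u < \<delta>"
      proof -
        have "norm u \<le> (\<Sum>i\<in>UNIV. \<bar>u $ i\<bar>)" by (rule norm_le_l1_cart)
        also have "\<dots> = real CARD('m) * \<epsilon>" using e0 by (simp add: u_def)
        also have "\<dots> \<le> real CARD('m) * (\<delta> / (2 * real CARD('m)))"
          by (intro mult_left_mono) (auto simp: \<epsilon>_def)
        also have "\<dots> < \<delta>" using \<delta>0 by simp
        finally show ?thesis .
      qed
      have b1: "z + u \<in> ball z \<delta>" "z - u \<in> ball z \<delta>" using nu by (auto simp: dist_norm)
      have flip: "\<And>i. i \<in> {1..n-1} \<Longrightarrow> s_fun d (coords idx (z + u)) i = - s_fun d (coords idx (z - u)) i"
        unfolding s_fun_def using E ed e0 sgn_flip by (simp add: co u_def)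
      have "F (z + u) $ jj = - F (z - u) $ jj" for jj
      proof -
        have "F (z + u) $ jj = Lin n k (\<lambda>i. - s_fun d (coords idx (z - u)) i) (idx jj)"
          unfolding F_eq by (rule Lin_cong[OF n3 idx_in]) (simp add: flip)
        also have "\<dots> = - F (z - u) $ jj" by (simp add: Lin_neg F_eq)
        finally show ?thesis .
      qed
      hence "F (z + u) = - F (z - u)" by (simp add: vec_eq_iff)
      hence "0 = (1/2) *\<^sub>R F (z + u) + (1/2) *\<^sub>R F (z - u)" by (simp add: algebra_simps)
      also have "\<dots> \<in> convex hull (F ` ball z \<delta>)"
        using b1 by (intro convexD convex_convex_hull hull_inc imageI) auto
      finally show "0 \<in> closure (convex hull (F ` ball z \<delta>))" using closure_subset by blast
    qed
  qed
qed

end
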